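(* For $R>1$ define $\eta:[1,R]\to\mathbb R$ by \[ \eta(r)=\frac{1}{R^5-1}\left[(R^3-1)r^2+(R^2-1)\left(\frac{R}{r}\right)^3\right]. \] Then $\eta$ satisfies $\eta''+\frac2r\eta'-\frac6{r^2}\eta=0$ on $[1,R]$ with $\eta(1)=\eta(R)=1$. Moreover, there exists $R^*>1$ such that $\eta(r)\ge\frac23$ for all $1\le r\le R\le R^*$. *)

theory Defs
  imports "HOL-Analysis.Analysis"
begin

definition eta :: "real \<Rightarrow> real \<Rightarrow> real" where
  "eta R r = ((R^3 - 1) * r^2 + (R^2 - 1) * (R / r)^3) / (R^5 - 1)"

end

theory Submission
  imports Defs
begin

lemma eta_alt: "x \<noteq> 0 \<Longrightarrow> eta R x = (R^3-1)/(R^5-1) * x^2 + (R^2-1)*R^3/(R^5-1) * inverse x ^ 3"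
  unfolding eta_def add_divide_distrib by (simp add: power_mult_distrib power_inverse divide_inverse ac_simps)

lemma gd1: "x > 0 \<Longrightarrow> ((\<lambda>x::real. a * x^2 + b * inverse x ^ 3) has_real_derivative (2*a*x - 3*b/x^4)) (at x)"
  by (auto intro!: derivative_eq_intros simp: field_simps power_eq_if eval_nat_numeral)

lemma gd2: "x > 0 \<Longrightarrow> ((\<lambda>x::real. 2*a*x - 3*b/x^4) has_real_derivative (2*a + 12*b/x^5)) (at x)"
  by (auto intro!: derivative_eq_intros simp: field_simps power_eq_if eval_nat_numeral)

lemma d1: assumes "x > 0"
  shows "(eta R has_real_derivative (2*((R^3-1)/(R^5-1))*x - 3*((R^2-1)*R^3/(R^5-1))/x^4)) (at x)"
proof -
  let ?a = "(R^3-1)/(R^5-1)" and ?b = "(R^2-1)*R^3/(R^5-1)"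
  have "((\<lambda>x. ?a * x^2 + ?b * inverse x ^ 3) has_real_derivative (2*?a*x - 3*?b/x^4)) (at x)"
    using assms by (rule gd1)
  then show ?thesis
    apply (rule has_field_derivative_transform_within_open[where S="{0<..}"])
    using assms by (auto simp: eta_alt)
qed

lemma d2: assumes "x > 0"
  shows "((\<lambda>x. 2*((R^3-1)/(R^5-1))*x - 3*((R^2-1)*R^3/(R^5-1))/x^4) has_real_derivative (2*((R^3-1)/(R^5-1)) + 12*((R^2-1)*R^3/(R^5-1))/x^5)) (at x)"
  using assms by (rule gd2)

lemma ode_gen: "(r::real) > 0 \<Longrightarrow> (2*a + 12*b/r^5) + 2/r*(2*a*r - 3*b/r^4) - 6/r^2*(a*r^2 + b*inverse r^3) = 0"
  by (simp add: field_simps eval_nat_numeral)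

lemma poly: assumes "1 < R" "R \<le> (11/10::real)" shows "3*R^3+3*R^2-4-2*R^5 \<ge> 0"
proof -
  have "3*R^3+3*R^2-4-2*R^5 = (R-1)*(-2*R^4-2*R^3+R^2+4*R+4)" by (simp add: algebra_simps eval_nat_numeral)
  moreover have "R^4 \<le> 2" "R^3 \<le> 2"
  proof -
    have "R^4 \<le> (11/10)^4" using assms by (intro power_mono) auto
    thus "R^4 \<le> 2" by (simp add: eval_nat_numeral)
    have "R^3 \<le> (11/10)^3" using assms by (intro power_mono) auto
    thus "R^3 \<le> 2" by (simp add: eval_nat_numeral)
  qed
  moreover have "R^2 \<ge> 0" by simp
  ultimately have "-2*R^4-2*R^3+R^2+4*R+4 \<ge> 0" "R - 1 \<ge> 0" "3*R^3+3*R^2-4-2*R^5 = (R-1)*(-2*R^4-2*R^3+R^2+4*R+4)" using assms by linarith+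
  then show ?thesis by (metis mult_nonneg_nonneg)
qed

theorem proposition3p1:
  shows "(\<forall>R::real. R > 1 \<longrightarrow>
            (\<forall>r \<in> {1..R}.
               eta R differentiable (at r) \<and>
               deriv (eta R) differentiable (at r) \<and>
               deriv (deriv (eta R)) r + 2 / r * deriv (eta R) r - 6 / r^2 * eta R r = 0)
            \<and> eta R 1 = 1 \<and> eta R R = 1)
       \<and> (\<exists>Rs::real. Rs > 1 \<and>
            (\<forall>R r::real. 1 < R \<and> 1 \<le> r \<and> r \<le> R \<and> R \<le> Rs \<longrightarrow> eta R r \<ge> 2/3))"
proof (intro conjI allI impI ballI)
  fix R r :: real assume R: "R > 1" and r: "r \<in> {1..R}"
  let ?a = "(R^3-1)/(R^5-1)" and ?b = "(R^2-1)*R^3/(R^5-1)"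
  define f1 where "f1 = (\<lambda>x::real. 2*?a*x - 3*?b/x^4)"
  have rp: "r > 0" using r by auto
  have D1: "\<And>x. x > 0 \<Longrightarrow> deriv (eta R) x = f1 x" unfolding f1_def using d1 by (rule DERIV_imp_deriv)
  have D1': "((deriv (eta R)) has_real_derivative (2*?a + 12*?b/r^5)) (at r)"
    apply (rule has_field_derivative_transform_within_open[where S="{0<..}", OF d2[OF rp]])
    using rp D1 by (auto simp: f1_def)
  show "eta R differentiable (at r)" using d1[OF rp] real_differentiable_def by blast
  show "deriv (eta R) differentiable (at r)" using D1' real_differentiable_def by blast
  have "deriv (deriv (eta R)) r = 2*?a + 12*?b/r^5" using D1' by (rule DERIV_imp_deriv)
  moreover have "eta R r = ?a * r^2 + ?b * inverse r ^ 3" using rp by (simp add: eta_alt)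
  ultimately show "deriv (deriv (eta R)) r + 2 / r * deriv (eta R) r - 6 / r^2 * eta R r = 0"
    using rp D1[OF rp] ode_gen[OF rp, of ?a ?b] unfolding f1_def by (simp only: power_inverse)
next
  fix R :: real assume R: "R > 1"
  have "R^5 \<noteq> 1" proof -
    have "1 < R^5" using R by (simp add: one_less_power)
    thus ?thesis by simp
  qed
  then show "eta R 1 = 1" "eta R R = 1" using R unfolding eta_def by (simp_all add: field_simps eval_nat_numeral)
next
  show "\<exists>Rs::real. Rs > 1 \<and>
            (\<forall>R r::real. 1 < R \<and> 1 \<le> r \<and> r \<le> R \<and> R \<le> Rs \<longrightarrow> eta R r \<ge> 2/3)"
  proof (intro exI[of _ "11/10"] conjI allI impI)
    fix R r :: real assume h: "1 < R \<and> 1 \<le> r \<and> r \<le> R \<and> R \<le> 11/10"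
    have d: "R^5 - 1 > 0" using h by (simp add: one_less_power)
    have a: "R^3 - 1 > 0" "R^2 - 1 > 0" using h by (simp_all add: one_less_power)
    have "r^2 \<ge> 1" using h by (simp add: one_le_power)
    hence 1: "(R^3-1)*r^2 \<ge> R^3 - 1" using a by (metis mult_left_mono mult.right_neutral less_imp_le)
    have "R/r \<ge> 1" using h by simp
    hence "(R/r)^3 \<ge> 1" by (simp add: one_le_power)
    hence 2: "(R^2-1)*(R/r)^3 \<ge> R^2 - 1" using a by (metis mult_left_mono mult.right_neutral less_imp_le)
    have "2/3 * (R^5-1) \<le> (R^3-1) + (R^2-1)" using poly[of R] h by simp
    also have "\<dots> \<le> (R^3-1)*r^2 + (R^2-1)*(R/r)^3" using 1 2 by simp
    finally show "eta R r \<ge> 2/3" unfolding eta_def using d by (simp add: pos_le_divide_eq)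
  qed simp
qed

end
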